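(* Let $G$ and $H$ be graphs on the same finite vertex set $V$. If $\mathcal R_0(G)=\mathcal R_0(H)$, then $G=H$.
   Context: A graph means a finite simple graph in which loops are allowed, with adjacency matrix $A$ over $\mathbf F_2$ ($A_{vv}=1$ iff $v$ has a loop). Let $\mathcal V$ be the $\mathbf F_2$-vector space with basis $V$ and $\mathcal E(x,y)=x^TAy$; for $W\subseteq V$, $\langle W\rangle$ is its span and $\langle W\rangle^{\perp\mathcal E}=\{x:\mathcal E(x,w)=0\ \forall w\in\langle W\rangle\}$. $W$ is reducible in $G$ if $\langle W\rangle+\langle W\rangle^{\perp\mathcal E}=\mathcal V$. The nullity of $W$ in $G$ is $|W|$ minus the $\mathbf F_2$-rank of the principal submatrix $A_{W,W}$. The pivotal poset $\mathcal R_0(G)$ is the collection of subsets $W\subseteq V$ that are reducible in $G$ and have nullity $0$ (equivalently, the subsets $W$ with $A_{W,W}$ invertible over $\mathbf F_2$; the empty set is included). *)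

theory Defs
  imports Main
begin

text \<open>A graph on a finite vertex set V (loops allowed) is a symmetric relation E on V;
  E v v means v carries a loop. The adjacency matrix over GF(2) has entry 1 at (u,v) iff E u v.
  Vectors of the GF(2)-space with basis V are identified with subsets of V
  (their supports); vector addition is symmetric difference.\<close>

definition is_graph :: "'a set \<Rightarrow> ('a \<Rightarrow> 'a \<Rightarrow> bool) \<Rightarrow> bool" where
  "is_graph V E \<longleftrightarrow> finite V \<and> (\<forall>u v. E u v \<longrightarrow> u \<in> V \<and> v \<in> V) \<and> (\<forall>u v. E u v = E v u)"

definition vadd :: "'a set \<Rightarrow> 'a set \<Rightarrow> 'a set" where
  "vadd x y = (x - y) \<union> (y - x)"

text \<open>The bilinear form x^T A y over GF(2); True represents 1.\<close>
definition bform :: "('a \<Rightarrow> 'a \<Rightarrow> bool) \<Rightarrow> 'a set \<Rightarrow> 'a set \<Rightarrow> bool" where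
  "bform E x y \<longleftrightarrow> odd (card {(u, v). u \<in> x \<and> v \<in> y \<and> E u v})"

text \<open>Span of a set W of basis vectors: all GF(2)-sums of elements of W, i.e. all subsets of W.\<close>
definition fspan :: "'a set \<Rightarrow> 'a set set" where
  "fspan W = {x. x \<subseteq> W}"

definition perpE :: "'a set \<Rightarrow> ('a \<Rightarrow> 'a \<Rightarrow> bool) \<Rightarrow> 'a set \<Rightarrow> 'a set set" where
  "perpE V E W = {x. x \<subseteq> V \<and> (\<forall>w \<in> fspan W. \<not> bform E x w)}"

definition reducible :: "'a set \<Rightarrow> ('a \<Rightarrow> 'a \<Rightarrow> bool) \<Rightarrow> 'a set \<Rightarrow> bool" where
  "reducible V E W \<longleftrightarrow> (\<forall>z. z \<subseteq> V \<longrightarrow> (\<exists>a \<in> fspan W. \<exists>b \<in> perpE V E W. z = vadd a b))"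

text \<open>Sum over GF(2) of the rows indexed by T of the principal submatrix A_{W,W}.\<close>
definition rowsum :: "('a \<Rightarrow> 'a \<Rightarrow> bool) \<Rightarrow> 'a set \<Rightarrow> 'a set \<Rightarrow> 'a set" where
  "rowsum E W T = {w \<in> W. odd (card {u \<in> T. E u w})}"

definition rows_indep :: "('a \<Rightarrow> 'a \<Rightarrow> bool) \<Rightarrow> 'a set \<Rightarrow> 'a set \<Rightarrow> bool" where
  "rows_indep E W S \<longleftrightarrow> (\<forall>T \<subseteq> S. T \<noteq> {} \<longrightarrow> rowsum E W T \<noteq> {})"

text \<open>GF(2)-rank of A_{W,W}: maximal number of linearly independent rows.\<close>
definition sub_rank :: "('a \<Rightarrow> 'a \<Rightarrow> bool) \<Rightarrow> 'a set \<Rightarrow> nat" where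
  "sub_rank E W = Max {card S | S. S \<subseteq> W \<and> rows_indep E W S}"

definition nullity :: "('a \<Rightarrow> 'a \<Rightarrow> bool) \<Rightarrow> 'a set \<Rightarrow> nat" where
  "nullity E W = card W - sub_rank E W"

definition pivotal_poset :: "'a set \<Rightarrow> ('a \<Rightarrow> 'a \<Rightarrow> bool) \<Rightarrow> 'a set set" where
  "pivotal_poset V E = {W. W \<subseteq> V \<and> reducible V E W \<and> nullity E W = 0}"

end

theory Submission
  imports Defs
begin

lemma odd_card_vadd:
  assumes "finite A" "finite B"
  shows "odd (card (vadd A B)) = (odd (card A) \<noteq> odd (card B))"
proof -
  have d: "card (vadd A B) = card (A - B) + card (B - A)"
    unfolding vadd_def using assms by (intro card_Un_disjoint) auto
  have a: "card A = card (A - B) + card (A \<inter> B)"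
    using card_Int_Diff[OF assms(1), of B] by simp
  have b: "card B = card (B - A) + card (A \<inter> B)"
    using card_Int_Diff[OF assms(2), of A] by (simp add: Int_commute)
  show ?thesis using d a b by presburger
qed

lemma pairs_fin:
  assumes "is_graph V E"
  shows "finite {(u, v). u \<in> x \<and> v \<in> y \<and> E u v}"
proof -
  have "{(u, v). u \<in> x \<and> v \<in> y \<and> E u v} \<subseteq> V \<times> V" using assms unfolding is_graph_def by auto
  moreover have "finite (V \<times> V)" using assms unfolding is_graph_def by auto
  ultimately show ?thesis by (rule finite_subset)
qed

lemma bform_add1:
  assumes "is_graph V E"
  shows "bform E (vadd x y) w = (bform E x w \<noteq> bform E y w)"
proof -
  have "{(u, v). u \<in> vadd x y \<and> v \<in> w \<and> E u v} =
        vadd {(u, v). u \<in> x \<and> v \<in> w \<and> E u v} {(u, v). u \<in> y \<and> v \<in> w \<and> E u v}"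
    unfolding vadd_def by auto
  thus ?thesis unfolding bform_def by (simp add: odd_card_vadd pairs_fin[OF assms])
qed

lemma bform_add2:
  assumes "is_graph V E"
  shows "bform E w (vadd x y) = (bform E w x \<noteq> bform E w y)"
proof -
  have "{(u, v). u \<in> w \<and> v \<in> vadd x y \<and> E u v} =
        vadd {(u, v). u \<in> w \<and> v \<in> x \<and> E u v} {(u, v). u \<in> w \<and> v \<in> y \<and> E u v}"
    unfolding vadd_def by auto
  thus ?thesis unfolding bform_def by (simp add: odd_card_vadd pairs_fin[OF assms])
qed

lemma bform_empty1: "bform E {} w = False" unfolding bform_def by simp
lemma bform_empty2: "bform E w {} = False" unfolding bform_def by simp

lemma bform_single: "bform E {a} {b} = E a b"
proof -
  have "{(u, v). u \<in> {a} \<and> v \<in> {b} \<and> E u v} = (if E a b then {(a,b)} else {})" by auto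
  thus ?thesis unfolding bform_def by simp
qed

lemma vadd_pair: "u \<noteq> v \<Longrightarrow> {u,v} = vadd {u} {v}"
  unfolding vadd_def by auto

lemma vadd_self: "vadd x (vadd x a) = a" unfolding vadd_def by auto

lemma nullity0:
  assumes "finite W"
  shows "nullity E W = 0 \<longleftrightarrow> rows_indep E W W"
proof -
  let ?S = "{card S | S. S \<subseteq> W \<and> rows_indep E W S}"
  have fin: "finite ?S"
  proof -
    have "?S \<subseteq> card ` Pow W" by auto
    thus ?thesis using assms by (meson finite_Pow_iff finite_imageI finite_subset)
  qed
  have ne: "0 \<in> ?S" unfolding rows_indep_def by force
  have le: "\<forall>k\<in>?S. k \<le> card W" using assms card_mono by blast
  show ?thesis
  proof
    assume "nullity E W = 0"
    hence "Max ?S \<ge> card W" unfolding nullity_def sub_rank_def by simp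
    moreover have "Max ?S \<in> ?S" using fin ne by (intro Max_in) auto
    ultimately obtain S where "S \<subseteq> W" "rows_indep E W S" "card S \<ge> card W" by auto
    hence "S = W" using assms card_subset_eq by (metis antisym card_mono)
    thus "rows_indep E W W" using \<open>rows_indep E W S\<close> by simp
  next
    assume "rows_indep E W W"
    hence "card W \<in> ?S" by auto
    hence "Max ?S \<ge> card W" using fin by (simp add: Max_ge)
    thus "nullity E W = 0" unfolding nullity_def sub_rank_def by simp
  qed
qed

lemma card_eq1: "card {x. x = a \<and> P x} = (if P a then 1 else 0)"
proof -
  have "{x. x = a \<and> P x} = (if P a then {a} else {})" by auto
  thus ?thesis by simp
qed

lemma fspan_single: "fspan {v} = {{},{v}}" unfolding fspan_def by auto
lemma fspan_pair: "fspan {u,v} = {{},{u},{v},{u,v}}" unfolding fspan_def by auto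

lemma single_iff:
  assumes g: "is_graph V E" and v: "v \<in> V"
  shows "{v} \<in> pivotal_poset V E \<longleftrightarrow> E v v"
proof -
  have ri: "rows_indep E {v} {v} \<longleftrightarrow> E v v"
  proof -
    have "\<And>T. T \<subseteq> {v} \<Longrightarrow> T \<noteq> {} \<Longrightarrow> T = {v}" by auto
    moreover have "rowsum E {v} {v} = (if E v v then {v} else {})" unfolding rowsum_def by (auto simp: card_eq1)
    ultimately show ?thesis unfolding rows_indep_def by (metis empty_not_insert subset_refl)
  qed
  have red: "E v v \<Longrightarrow> reducible V E {v}"
    unfolding reducible_def
  proof (intro allI impI)
    fix z assume ev: "E v v" and z: "z \<subseteq> V"
    define a where "a = (if bform E z {v} then {v} else {})"
    have ab: "bform E a {v} = bform E z {v}" unfolding a_def using ev by (simp add: bform_single bform_empty1)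
    have s1: "vadd z a \<subseteq> V" using z v unfolding vadd_def a_def by auto
    have s2: "\<not> bform E (vadd z a) {v}" using ab by (simp add: bform_add1[OF g])
    have "vadd z a \<in> perpE V E {v}"
      unfolding perpE_def fspan_single using s1 s2 by (auto simp: bform_empty2)
    moreover have "a \<in> fspan {v}" unfolding a_def fspan_def by auto
    moreover have "z = vadd a (vadd z a)" unfolding vadd_def by auto
    ultimately show "\<exists>a\<in>fspan {v}. \<exists>b\<in>perpE V E {v}. z = vadd a b" by blast
  qed
  have "{v} \<in> pivotal_poset V E \<longleftrightarrow> reducible V E {v} \<and> rows_indep E {v} {v}"
    using v nullity0[of "{v}" E] unfolding pivotal_poset_def by simp
  thus ?thesis using ri red by blast
qed

lemma pair_iff:
  assumes g: "is_graph V E" and u: "u \<in> V" and v: "v \<in> V" and uv: "u \<noteq> v"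
  shows "{u,v} \<in> pivotal_poset V E \<longleftrightarrow> (E u v \<noteq> (E u u \<and> E v v))"
proof -
  have sym: "E v u = E u v" using g unfolding is_graph_def by auto
  have ri: "rows_indep E {u,v} {u,v} \<longleftrightarrow> (E u v \<noteq> (E u u \<and> E v v))"
  proof -
    have T: "\<And>T. T \<subseteq> {u,v} \<Longrightarrow> T \<noteq> {} \<Longrightarrow> T = {u} \<or> T = {v} \<or> T = {u,v}" by auto
    have r1: "rowsum E {u,v} {u} = {w \<in> {u,v}. E u w}" unfolding rowsum_def by (auto simp: card_eq1)
    have r2: "rowsum E {u,v} {v} = {w \<in> {u,v}. E v w}" unfolding rowsum_def by (auto simp: card_eq1)
    have c: "\<And>w. card {x \<in> {u,v}. E x w} = (if E u w then 1 else 0) + (if E v w then 1 else 0)"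
    proof -
      fix w
      have "{x \<in> {u,v}. E x w} = (if E u w then {u} else {}) \<union> (if E v w then {v} else {})" by auto
      thus "card {x \<in> {u,v}. E x w} = (if E u w then 1 else 0) + (if E v w then 1 else 0)"
        using uv by simp
    qed
    have r3: "rowsum E {u,v} {u,v} = {w \<in> {u,v}. E u w \<noteq> E v w}"
      unfolding rowsum_def c by auto
    show ?thesis unfolding rows_indep_def
      apply (rule iffI)
      subgoal
        apply (frule spec[of _ "{u}"], frule spec[of _ "{v}"], drule spec[of _ "{u,v}"])
        using r1 r2 r3 sym by auto
      subgoal
      proof (intro allI impI)
        fix T assume d: "E u v \<noteq> (E u u \<and> E v v)" and t: "T \<subseteq> {u,v}" "T \<noteq> {}"
        from T[OF t] show "rowsum E {u,v} T \<noteq> {}"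
          apply (elim disjE)
          subgoal using r1 d by auto
          subgoal using r2 d sym by auto
          subgoal using r3 d sym by auto
          done
      qed
      done
  qed
  have red: "E u v \<noteq> (E u u \<and> E v v) \<Longrightarrow> reducible V E {u,v}"
    unfolding reducible_def
  proof (intro allI impI)
    fix z assume det: "E u v \<noteq> (E u u \<and> E v v)" and z: "z \<subseteq> V"
    have bu: "\<And>x. bform E x {u,v} = (bform E x {u} \<noteq> bform E x {v})"
      by (subst vadd_pair[OF uv]) (rule bform_add2[OF g])
    have bu1: "\<And>w. bform E {u,v} w = (bform E {u} w \<noteq> bform E {v} w)"
      by (subst vadd_pair[OF uv]) (rule bform_add1[OF g])
    have bprop: "\<And>p q a b c. c \<noteq> (a \<and> b) \<Longrightarrow> (\<not>p \<and> \<not>q) \<or> (a=p \<and> c=q) \<or> (c=p \<and> b=q) \<or> ((a\<noteq>c)=p \<and> (c\<noteq>b)=q)"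
      by blast
    have "\<exists>a\<in>{{},{u},{v},{u,v}}. bform E a {u} = bform E z {u} \<and> bform E a {v} = bform E z {v}"
      using bprop[OF det, where p="bform E z {u}" and q="bform E z {v}"]
      by (elim disjE) (auto simp: bu1 bform_single bform_empty1 sym)
    then obtain a where a: "a \<in> {{},{u},{v},{u,v}}" "bform E a {u} = bform E z {u}" "bform E a {v} = bform E z {v}"
      by blast
    have "vadd z a \<in> perpE V E {u,v}"
    proof -
      have "vadd z a \<subseteq> V" using z a(1) u v unfolding vadd_def by auto
      moreover have "\<forall>w\<in>fspan {u,v}. \<not> bform E (vadd z a) w"
        unfolding fspan_pair using a(2,3) by (auto simp: bform_add1[OF g] bform_empty2 bu)
      ultimately show ?thesis unfolding perpE_def by auto
    qed
    moreover have "a \<in> fspan {u,v}" using a(1) unfolding fspan_def by auto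
    moreover have "z = vadd a (vadd z a)" unfolding vadd_def by auto
    ultimately show "\<exists>a\<in>fspan {u,v}. \<exists>b\<in>perpE V E {u,v}. z = vadd a b" by blast
  qed
  have "{u,v} \<in> pivotal_poset V E \<longleftrightarrow> reducible V E {u,v} \<and> rows_indep E {u,v} {u,v}"
    using u v nullity0[of "{u,v}" E] unfolding pivotal_poset_def by simp
  thus ?thesis using ri red by blast
qed

theorem mainTheorem7:
  fixes V :: "'a set" and G H :: "'a \<Rightarrow> 'a \<Rightarrow> bool"
  assumes "is_graph V G" and "is_graph V H"
    and "pivotal_poset V G = pivotal_poset V H"
  shows "G = H"
proof (intro ext)
  fix x y
  show "G x y = H x y"
  proof (cases "x \<in> V \<and> y \<in> V")
    case False
    thus ?thesis using assms(1,2) unfolding is_graph_def by auto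
  next
    case True
    have lx: "G x x = H x x" using single_iff[OF assms(1)] single_iff[OF assms(2)] assms(3) True by metis
    have ly: "G y y = H y y" using single_iff[OF assms(1)] single_iff[OF assms(2)] assms(3) True by metis
    show ?thesis
    proof (cases "x = y")
      case True thus ?thesis using lx by simp
    next
      case False
      have "(G x y \<noteq> (G x x \<and> G y y)) = (H x y \<noteq> (H x x \<and> H y y))"
        using pair_iff[OF assms(1) _ _ False] pair_iff[OF assms(2) _ _ False] assms(3) True by metis
      thus ?thesis using lx ly by auto
    qed
  qed
qed

end
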